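(* Let $M$ be an almost complex $2m$-manifold, let $J_0$ be an almost complex structure on $M$ and let $J_t=(I+L_t)J_0(I+L_t)^{-1}$, $t\in(-\epsilon,\epsilon)$, be a small deformation of $J_0$. Then for every $a\in(0,\epsilon)$ and every $x\in M$, \[ \operatorname{rk} N_{J_t}|_x \ge \max\{\operatorname{rk} N_{J_0}|_x,\ \operatorname{rk} N_{J_a}|_x\} \] for all $t\in[-a,a]$ except a finite number.
   Context: An almost complex structure is $J\in\mathrm{End}(TM)$ with $J^2=-\mathrm{id}$. A small deformation of $J_0$ is a family $J_t=(I+L_t)J_0(I+L_t)^{-1}$ where $L_t\in\mathrm{End}(TM)$, $L_tJ_0+J_0L_t=0$, $L_t=tL+o(t)$, and $L_t$ is a power series in $t$ (with smooth coefficients) convergent for $t\in(-\epsilon,\epsilon)$. The Nijenhuis tensor is $N_J(X,Y)=[JX,JY]-J[JX,Y]-J[X,JY]-[X,Y]$, and $\operatorname{rk}N_J|_x$ denotes the complex rank at $x$ of the complexified tensor $(N_J)^{\mathbb{C}}:TM^{\mathbb{C}}\otimes TM^{\mathbb{C}}\to TM^{\mathbb{C}}$ (equivalently, the rank at $x$ of $\pi^{0,2}\circ d:A^{1,0}\to A^{0,2}$). *)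

theory Defs
  imports "HOL-Analysis.Analysis"
begin

text \<open>Local (chart) model: the manifold is an open set U of real^'n, tangent vectors are
elements of real^'n, endomorphism fields are matrix fields real^'n \<Rightarrow> real^'n^'n.\<close>

fun Ck_on :: "nat \<Rightarrow> (real^'n) set \<Rightarrow> (real^'n \<Rightarrow> real) \<Rightarrow> bool" where
  "Ck_on 0 U f = continuous_on U f"
| "Ck_on (Suc k) U f = ((\<forall>x\<in>U. f differentiable (at x)) \<and> continuous_on U f \<and>
      (\<forall>i. Ck_on k U (\<lambda>x. frechet_derivative f (at x) (axis i 1))))"

definition smooth_on :: "(real^'n) set \<Rightarrow> (real^'n \<Rightarrow> real) \<Rightarrow> bool" where
  "smooth_on U f \<longleftrightarrow> (\<forall>k. Ck_on k U f)"

definition smooth_mat_field :: "(real^'n) set \<Rightarrow> (real^'n \<Rightarrow> real^'n^'n) \<Rightarrow> bool" where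
  "smooth_mat_field U A \<longleftrightarrow> (\<forall>i j. smooth_on U (\<lambda>x. A x $ i $ j))"

definition almost_complex_structure :: "(real^'n) set \<Rightarrow> (real^'n \<Rightarrow> real^'n^'n) \<Rightarrow> bool" where
  "almost_complex_structure U J \<longleftrightarrow> open U \<and> smooth_mat_field U J \<and>
     (\<forall>x\<in>U. J x ** J x = - mat 1)"

definition lie_bracket :: "(real^'n \<Rightarrow> real^'n) \<Rightarrow> (real^'n \<Rightarrow> real^'n) \<Rightarrow> real^'n \<Rightarrow> real^'n" where
  "lie_bracket X Y x = frechet_derivative Y (at x) (X x) - frechet_derivative X (at x) (Y x)"

definition nijenhuis_field ::
  "(real^'n \<Rightarrow> real^'n^'n) \<Rightarrow> (real^'n \<Rightarrow> real^'n) \<Rightarrow> (real^'n \<Rightarrow> real^'n) \<Rightarrow> real^'n \<Rightarrow> real^'n" where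
  "nijenhuis_field J X Y x =
     lie_bracket (\<lambda>y. J y *v X y) (\<lambda>y. J y *v Y y) x
     - J x *v lie_bracket (\<lambda>y. J y *v X y) Y x
     - J x *v lie_bracket X (\<lambda>y. J y *v Y y) x
     - lie_bracket X Y x"

definition nijenhuis :: "(real^'n \<Rightarrow> real^'n^'n) \<Rightarrow> real^'n \<Rightarrow> real^'n \<Rightarrow> real^'n \<Rightarrow> real^'n" where
  "nijenhuis J x u v = nijenhuis_field J (\<lambda>_. u) (\<lambda>_. v) x"

definition nijenhuis_C :: "(real^'n \<Rightarrow> real^'n^'n) \<Rightarrow> real^'n \<Rightarrow> complex^'n \<Rightarrow> complex^'n \<Rightarrow> complex^'n" where
  "nijenhuis_C J x u v = (\<Sum>i\<in>UNIV. \<Sum>j\<in>UNIV.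
      (u $ i * v $ j) *s (\<chi> k. complex_of_real (nijenhuis J x (axis i 1) (axis j 1) $ k)))"

text \<open>Complex rank at x of (N_J)^C : TM^C \<otimes> TM^C \<rightarrow> TM^C: complex dimension of its image,
i.e. of the complex span of all values N^C(u,v).\<close>
definition nijenhuis_rank :: "(real^'n \<Rightarrow> real^'n^'n) \<Rightarrow> real^'n \<Rightarrow> nat" where
  "nijenhuis_rank J x = vec.dim (range (\<lambda>(u, v). nijenhuis_C J x u v))"

definition deformed :: "(real^'n \<Rightarrow> real^'n^'n) \<Rightarrow> (real^'n \<Rightarrow> real^'n^'n) \<Rightarrow> real^'n \<Rightarrow> real^'n^'n" where
  "deformed J0 Lt x = (mat 1 + Lt x) ** J0 x ** matrix_inv (mat 1 + Lt x)"

end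

theory Submission
  imports Defs "HOL-Complex_Analysis.Complex_Analysis"
begin

no_notation fps_nth (infixl \<open>$\<close> 75)

definition Gc :: "complex set \<Rightarrow> real \<Rightarrow> (real \<Rightarrow> complex) \<Rightarrow> bool" where
  "Gc S e f \<longleftrightarrow> (\<exists>h. h holomorphic_on S \<and> (\<forall>t. \<bar>t\<bar> < e \<longrightarrow> h (of_real t) = f t))"

lemma Gc_const: "Gc S e (\<lambda>t. c)"
  unfolding Gc_def by (rule exI[of _ "\<lambda>_. c"]) auto

lemma Gc_add: "Gc S e f \<Longrightarrow> Gc S e g \<Longrightarrow> Gc S e (\<lambda>t. f t + g t)"
  unfolding Gc_def by (metis (no_types, lifting) holomorphic_on_add)

lemma Gc_diff: "Gc S e f \<Longrightarrow> Gc S e g \<Longrightarrow> Gc S e (\<lambda>t. f t - g t)"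
  unfolding Gc_def by (metis (no_types, lifting) holomorphic_on_diff)

lemma Gc_mult: "Gc S e f \<Longrightarrow> Gc S e g \<Longrightarrow> Gc S e (\<lambda>t. f t * g t)"
  unfolding Gc_def by (metis (no_types, lifting) holomorphic_on_mult)

lemma Gc_mono: "Gc S e f \<Longrightarrow> T \<subseteq> S \<Longrightarrow> Gc T e f"
  unfolding Gc_def by (meson holomorphic_on_subset)

lemma Gc_sum: "finite I \<Longrightarrow> (\<And>i. i \<in> I \<Longrightarrow> Gc S e (f i)) \<Longrightarrow> Gc S e (\<lambda>t. \<Sum>i\<in>I. f i t)"
  by (induction I rule: finite_induct) (auto intro: Gc_add Gc_const)

lemma Gc_prod: "finite I \<Longrightarrow> (\<And>i. i \<in> I \<Longrightarrow> Gc S e (f i)) \<Longrightarrow> Gc S e (\<lambda>t. \<Prod>i\<in>I. f i t)"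
  by (induction I rule: finite_induct) (auto intro: Gc_mult Gc_const)

lemma Gc_div:
  assumes "Gc S e f" "D holomorphic_on S" "\<And>z. z \<in> S \<Longrightarrow> D z \<noteq> 0"
    "\<And>t. \<bar>t\<bar> < e \<Longrightarrow> D (of_real t) = d t"
  shows "Gc S e (\<lambda>t. f t / d t)"
proof -
  obtain h where h: "h holomorphic_on S" "\<And>t. \<bar>t\<bar> < e \<Longrightarrow> h (of_real t) = f t"
    using assms(1) unfolding Gc_def by blast
  show ?thesis unfolding Gc_def
    by (rule exI[of _ "\<lambda>z. h z / D z"]) (use h assms in \<open>auto intro: holomorphic_on_divide\<close>)
qed

lemma Gc_det:
  fixes M :: "real \<Rightarrow> complex^'n^'n"
  assumes "\<And>i j. Gc S e (\<lambda>t. M t $ i $ j)"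
  shows "Gc S e (\<lambda>t. det (M t))"
  unfolding det_def
  by (intro Gc_sum Gc_mult Gc_prod Gc_const assms) auto

lemma of_real_det: "complex_of_real (det (A::real^'n^'n)) = det (\<chi> i j. complex_of_real (A $ i $ j))"
  unfolding det_def by (simp add: of_real_sum of_real_prod)

lemma powser_Gc:
  fixes c :: "nat \<Rightarrow> real"
  assumes S: "S \<subseteq> ball 0 e"
    and sm: "\<And>t. \<bar>t\<bar> < e \<Longrightarrow> (\<lambda>k. t ^ k * c k) sums f t"
  shows "Gc S e (\<lambda>t. complex_of_real (f t))"
proof -
  define h where "h z = (\<Sum>k. complex_of_real (c k) * z ^ k)" for z
  have "h holomorphic_on ball 0 e"
    unfolding holomorphic_on_def
  proof
    fix z :: complex assume z: "z \<in> ball 0 e"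
    define K where "K = (norm z + e) / 2"
    have nz: "norm z < e" using z by (simp add: dist_norm)
    have n0: "0 \<le> norm z" by simp
    have K1: "norm z < K" using nz n0 unfolding K_def by (simp add: field_simps)
    have K2: "K < e" using nz n0 unfolding K_def by (simp add: field_simps)
    have K3: "0 \<le> K" using K1 n0 by linarith
    note K = K1 K2 K3
    have "summable (\<lambda>k. K ^ k * c k)" using sm[of K] K by (auto simp: sums_iff)
    hence "summable (\<lambda>k. complex_of_real (K ^ k * c k))"
      by (rule summable_of_real)
    hence "summable (\<lambda>k. complex_of_real (c k) * complex_of_real K ^ k)"
      by (simp add: mult.commute)
    moreover have "norm z < norm (complex_of_real K)" using K by simp
    ultimately have "DERIV h z :> (\<Sum>n. diffs (\<lambda>k. complex_of_real (c k)) n * z^n)"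
      unfolding h_def by (rule termdiffs_strong)
    thus "h field_differentiable at z within ball 0 e"
      using field_differentiable_at_within field_differentiable_def by blast
  qed
  moreover have "h (of_real t) = of_real (f t)" if "\<bar>t\<bar> < e" for t
  proof -
    have "(\<lambda>k. complex_of_real (t ^ k * c k)) sums of_real (f t)"
      using sm[OF that] by (rule sums_of_real)
    hence "(\<lambda>k. complex_of_real (c k) * complex_of_real t ^ k) sums of_real (f t)"
      by (simp add: mult.commute)
    thus ?thesis unfolding h_def by (simp add: sums_iff)
  qed
  ultimately show ?thesis unfolding Gc_def using S
    by (meson holomorphic_on_subset)
qed

lemma finite_zeros:
  assumes h: "h holomorphic_on S" and S: "open S" "connected S"
    and sub: "complex_of_real ` {-a..a} \<subseteq> S"
    and t0: "t0 \<in> {-a..a}" "h (of_real t0) \<noteq> 0"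
  shows "finite {t \<in> {-a..a}. h (of_real t) = 0}"
proof (rule ccontr)
  define Z where "Z = {t \<in> {-a..a}. h (of_real t) = 0}"
  assume "infinite {t \<in> {-a..a}. h (of_real t) = 0}"
  hence inf: "infinite (complex_of_real ` Z)" unfolding Z_def
    by (simp add: finite_image_iff inj_on_def)
  have cpt: "compact (complex_of_real ` {-a..a})"
    by (intro compact_continuous_image continuous_intros) auto
  have "complex_of_real ` Z \<subseteq> complex_of_real ` {-a..a}" unfolding Z_def by auto
  then obtain \<xi> where \<xi>: "\<xi> \<in> complex_of_real ` {-a..a}" "\<xi> islimpt complex_of_real ` Z"
    using cpt inf compact_eq_Bolzano_Weierstrass by blast
  have "h (of_real t0) = 0"
    by (rule analytic_continuation[OF h S(1) S(2), of "complex_of_real ` Z" \<xi>])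
      (use \<xi> sub t0 in \<open>auto simp: Z_def\<close>)
  thus False using t0 by simp
qed

lemma row_eq: "row i A = A $ i"
  by (simp add: row_def vec_eq_iff)

lemma det_nz_rows: "det (A::'a::field^'n^'n) \<noteq> 0 \<longleftrightarrow> (\<forall>c. (\<Sum>i\<in>UNIV. c i *s row i A) = 0 \<longrightarrow> (\<forall>i. c i = 0))"
  by (simp add: invertible_det_nz[symmetric] invertible_right_inverse matrix_right_invertible_independent_rows)

lemma indep_rows_det:
  fixes f :: "'n::finite \<Rightarrow> 'a::field^'n"
  assumes inj: "inj f" and ind: "vec.independent (range f)"
  shows "det (\<chi> k. f k) \<noteq> 0"
  unfolding det_nz_rows row_eq
proof (rule allI, rule impI)
  fix c :: "'n \<Rightarrow> 'a" assume c: "(\<Sum>i\<in>UNIV. c i *s (\<chi> k. f k) $ i) = 0"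
  show "\<forall>i. c i = 0"
  proof (rule ccontr)
    assume "\<not> (\<forall>i. c i = 0)"
    then obtain i where i: "c i \<noteq> 0" by blast
    have "(\<Sum>v\<in>range f. c (inv f v) *s v) = (\<Sum>k\<in>UNIV. c (inv f (f k)) *s f k)"
      by (rule sum.reindex[OF inj_on_subset[OF inj], simplified])
    also have "\<dots> = 0" using c inj by simp
    finally have "vec.dependent (range f)"
      using i inj by (subst vec.dependent_finite) (auto intro!: exI[of _ "\<lambda>v. c (inv f v)"])
    thus False using ind by simp
  qed
qed

lemma det_rows_inj:
  fixes f :: "'n::finite \<Rightarrow> 'a::field^'n"
  assumes d: "det (\<chi> k. f k) \<noteq> 0"
  shows "inj f"
proof
  fix i j assume eq: "f i = f j"
  show "i = j"
  proof (rule ccontr)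
    assume ij: "i \<noteq> j"
    define c where "c k = (if k = i then 1 else 0) - (if k = j then 1 else (0::'a))" for k
    have "(\<Sum>k\<in>UNIV. c k *s f k) = (\<Sum>k\<in>UNIV. (if k = i then f k else 0)) - (\<Sum>k\<in>UNIV. (if k = j then f k else 0))"
      unfolding sum_subtractf[symmetric] by (rule sum.cong) (auto simp: c_def vector_sub_rdistrib)
    also have "\<dots> = 0" using eq by simp
    finally have "(\<Sum>k\<in>UNIV. c k *s row k (\<chi> k. f k)) = 0" by (simp add: row_eq)
    hence "c i = 0" using d unfolding det_nz_rows by blast
    thus False using ij by (simp add: c_def)
  qed
qed

lemma det_rows_indep:
  fixes f :: "'n::finite \<Rightarrow> 'a::field^'n"
  assumes d: "det (\<chi> k. f k) \<noteq> 0"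
  shows "vec.independent (f ` K)"
proof
  have inj: "inj f" using det_rows_inj[OF d] .
  assume "vec.dependent (f ` K)"
  then obtain u v where uv: "v \<in> f ` K" "u v \<noteq> 0" "(\<Sum>v\<in>f ` K. u v *s v) = 0"
    using vec.dependent_finite[of "f ` K"] by auto
  define c where "c k = (if k \<in> K then u (f k) else 0)" for k
  have "(\<Sum>k\<in>UNIV. c k *s f k) = (\<Sum>k\<in>K. u (f k) *s f k)"
  proof -
    have "(\<Sum>k\<in>UNIV. c k *s f k) = (\<Sum>k\<in>UNIV. if k \<in> K then u (f k) *s f k else 0)"
      by (rule sum.cong) (auto simp: c_def)
    thus ?thesis using sum.inter_restrict[of UNIV "\<lambda>k. u (f k) *s f k" K] by simp
  qed
  also have "\<dots> = (\<Sum>v\<in>f ` K. u v *s v)"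
    by (rule sum.reindex[OF inj_on_subset[OF inj], symmetric, simplified])
  also have "\<dots> = 0" by (rule uv(3))
  finally have "(\<Sum>k\<in>UNIV. c k *s row k (\<chi> k. f k)) = 0" by (simp add: row_eq)
  hence c0: "\<forall>k. c k = 0" using d unfolding det_nz_rows by blast
  obtain k where "k \<in> K" "v = f k" using uv(1) by blast
  thus False using c0[rule_format, of k] uv(2) by (simp add: c_def)
qed

lemma generic_rank:
  fixes w :: "real \<Rightarrow> 'p::finite \<Rightarrow> complex^'n"
  assumes G: "\<And>p k. Gc S e (\<lambda>t. w t p $ k)" and S: "open S" "connected S"
    and sub: "complex_of_real ` {-a..a} \<subseteq> S" and ae: "a < e" and a0: "0 \<le> a"
  shows "\<exists>Z. finite Z \<and> (\<forall>t\<in>{-a..a}-Z. \<forall>s\<in>{-a..a}. vec.dim (range (w s)) \<le> vec.dim (range (w t)))"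
proof -
  define r where "r s = vec.dim (range (w s))" for s
  have fin: "finite (r ` {-a..a})"
    by (rule finite_subset[of _ "{..CARD('n)}"]) (auto simp: r_def dim_subset_UNIV_cart_gen)
  define R where "R = Max (r ` {-a..a})"
  have ne: "r ` {-a..a} \<noteq> {}" using a0 by auto
  obtain t0 where t0: "t0 \<in> {-a..a}" "r t0 = R"
    using Max_in[OF fin ne] unfolding R_def by auto
  have Rge: "r s \<le> R" if "s \<in> {-a..a}" for s
    unfolding R_def using fin that by (auto intro: Max_ge)
  obtain B0 where B0: "B0 \<subseteq> range (w t0)" "vec.independent B0" "range (w t0) \<subseteq> vec.span B0"
    "card B0 = vec.dim (range (w t0))"
    by (rule vec.basis_exists[of "range (w t0)"])
  obtain B where B: "B0 \<subseteq> B" "vec.independent B" "UNIV \<subseteq> vec.span B"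
    by (rule vec.maximal_independent_subset_extend[OF subset_UNIV B0(2)])
  have finB: "finite B" using B(2) vec.finiteI_independent by blast
  have cardB: "card B = CARD('n)"
    using vec.basis_card_eq_dim[OF subset_UNIV B(3) B(2)] vec_dim_card by simp
  obtain \<beta> where \<beta>: "bij_betw \<beta> (UNIV::'n set) B"
    using finite_same_card_bij[of "UNIV::'n set" B] finB cardB by auto
  define \<pi> where "\<pi> b = (SOME p. w t0 p = b)" for b
  have \<pi>: "w t0 (\<pi> b) = b" if "b \<in> B0" for b
    unfolding \<pi>_def using B0(1) that by (metis (mono_tags, lifting) imageE someI_ex subsetD)
  define f where "f t k = (if \<beta> k \<in> B0 then w t (\<pi> (\<beta> k)) else \<beta> k)" for t k
  define M where "M t = (\<chi> k. f t k)" for t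
  have "Gc S e (\<lambda>t. det (M t))"
  proof (rule Gc_det)
    fix i j show "Gc S e (\<lambda>t. M t $ i $ j)"
      unfolding M_def f_def by (cases "\<beta> i \<in> B0") (simp_all add: G Gc_const)
  qed
  then obtain h where h: "h holomorphic_on S" "\<And>t. \<bar>t\<bar> < e \<Longrightarrow> h (of_real t) = det (M t)"
    unfolding Gc_def by blast
  have f0: "f t0 = \<beta>" using \<pi> by (auto simp: f_def)
  have "det (M t0) \<noteq> 0" unfolding M_def f0
    using \<beta> B(2) by (intro indep_rows_det) (auto simp: bij_betw_def)
  hence ht0: "h (of_real t0) \<noteq> 0" using h(2) t0(1) ae by auto
  define Z where "Z = {t \<in> {-a..a}. h (of_real t) = 0}"
  have finZ: "finite Z" unfolding Z_def by (rule finite_zeros[OF h(1) S sub t0(1) ht0])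
  have "R \<le> r t" if t: "t \<in> {-a..a} - Z" for t
  proof -
    have "det (M t) \<noteq> 0" using t h(2)[of t] ae by (auto simp: Z_def)
    hence indep: "vec.independent (f t ` K)" and inj: "inj (f t)" for K
      unfolding M_def using det_rows_indep[of "f t"] det_rows_inj[of "f t"] by auto
    define K where "K = {k. \<beta> k \<in> B0}"
    have "\<beta> ` K = B0" using \<beta> B(1) unfolding K_def bij_betw_def by auto
    hence cK: "card K = card B0"
      using \<beta> by (metis bij_betw_def card_image inj_on_subset subset_UNIV)
    have "card (f t ` K) = card K" using inj by (simp add: card_image inj_on_subset)
    moreover have "f t ` K \<subseteq> range (w t)" by (auto simp: f_def K_def)
    ultimately have "card K \<le> r t" unfolding r_def
      using vec.independent_card_le_dim indep by metis
    thus ?thesis using cK B0(4) t0(2) r_def by simp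
  qed
  thus ?thesis using finZ Rge unfolding r_def
    by (intro exI[of _ Z]) (meson order_trans)
qed

lemma vec_has_derivative:
  fixes f :: "'a::real_normed_vector \<Rightarrow> 'b::euclidean_space^'n"
  assumes "\<And>i. ((\<lambda>y. f y $ i) has_derivative (\<lambda>h. f' h $ i)) (at x within S)"
  shows "(f has_derivative f') (at x within S)"
proof (subst has_derivative_componentwise_within, intro ballI)
  fix b :: "'b^'n" assume "b \<in> Basis"
  then obtain i u where b: "b = axis i u" "u \<in> Basis" unfolding Basis_vec_def by blast
  have "\<forall>u\<in>Basis. ((\<lambda>y. f y $ i \<bullet> u) has_derivative (\<lambda>h. f' h $ i \<bullet> u)) (at x within S)"
    using assms[of i] by (subst (asm) has_derivative_componentwise_within)
  hence "((\<lambda>y. f y $ i \<bullet> u) has_derivative (\<lambda>h. f' h $ i \<bullet> u)) (at x within S)"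
    using b(2) by blast
  thus "((\<lambda>y. f y \<bullet> b) has_derivative (\<lambda>h. f' h \<bullet> b)) (at x within S)"
    using b by (simp add: inner_axis)
qed

lemma mat_differentiable:
  fixes f :: "'a::real_normed_vector \<Rightarrow> real^'n^'m"
  assumes "\<And>i j. (\<lambda>y. f y $ i $ j) differentiable (at x)"
  shows "f differentiable (at x)"
proof -
  define D where "D h = (\<chi> i j. frechet_derivative (\<lambda>y. f y $ i $ j) (at x) h)" for h
  have "(f has_derivative D) (at x)"
  proof (rule vec_has_derivative)
    fix i
    show "((\<lambda>y. f y $ i) has_derivative (\<lambda>h. D h $ i)) (at x)"
    proof (rule vec_has_derivative)
      fix j show "((\<lambda>y. f y $ i $ j) has_derivative (\<lambda>h. D h $ i $ j)) (at x)"
      proof -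
        have "((\<lambda>y. f y $ i $ j) has_derivative frechet_derivative (\<lambda>y. f y $ i $ j) (at x)) (at x)"
          using assms[of i j] frechet_derivative_works by blast
        thus ?thesis by (simp add: D_def)
      qed
    qed
  qed
  thus ?thesis unfolding differentiable_def by blast
qed

lemma entry_has_derivative:
  assumes "(f has_derivative f') F"
  shows "((\<lambda>y. f y $ i $ j) has_derivative (\<lambda>h. f' h $ i $ j)) F"
proof -
  have "((\<lambda>y. f y $ i) has_derivative (\<lambda>h. f' h $ i)) F"
    by (rule bounded_linear.has_derivative[OF bounded_linear_vec_nth assms])
  thus ?thesis by (rule bounded_linear.has_derivative[OF bounded_linear_vec_nth])
qed

lemma entry_differentiable:
  "f differentiable F \<Longrightarrow> (\<lambda>y. f y $ i $ j) differentiable F"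
  unfolding differentiable_def using entry_has_derivative by blast

lemma differentiable_prod':
  fixes f :: "'i \<Rightarrow> 'a::real_normed_vector \<Rightarrow> real"
  shows "finite I \<Longrightarrow> (\<And>i. i \<in> I \<Longrightarrow> f i differentiable (at x)) \<Longrightarrow>
    (\<lambda>y. \<Prod>i\<in>I. f i y) differentiable (at x)"
  by (induction I rule: finite_induct) auto

lemma det_differentiable:
  fixes M :: "'a::real_normed_vector \<Rightarrow> real^'n^'n"
  assumes "\<And>i j. (\<lambda>y. M y $ i $ j) differentiable (at x)"
  shows "(\<lambda>y. det (M y)) differentiable (at x)"
  unfolding det_def
  by (intro differentiable_sum ballI differentiable_mult differentiable_const differentiable_prod' assms) auto

lemma minv:
  assumes "invertible (A::'a::semiring_1^'n^'n)"
  shows "A ** matrix_inv A = mat 1" "matrix_inv A ** A = mat 1"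
  using someI_ex[OF assms[unfolded invertible_def]] unfolding matrix_inv_def by auto

lemma minv_entry:
  fixes A :: "real^'n^'n"
  assumes "invertible A"
  shows "matrix_inv A $ k $ j = det (\<chi> i l. if l = k then axis j 1 $ i else A $ i $ l) / det A"
proof -
  have d: "det A \<noteq> 0" using assms invertible_det_nz by blast
  have "A *v (matrix_inv A *v axis j 1) = axis j 1"
    using minv(1)[OF assms] by (simp add: matrix_vector_mul_assoc)
  hence "matrix_inv A *v axis j 1 = (\<chi> k. det (\<chi> i l. if l = k then axis j 1 $ i else A $ i $ l) / det A)"
    using cramer[OF d] by blast
  moreover have "(matrix_inv A *v axis j 1) $ k = matrix_inv A $ k $ j"
    by (simp add: matrix_vector_mult_def axis_def if_distrib cong: if_cong)
  ultimately show ?thesis by simp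
qed

lemma mmult_neg: "(A::real^'n^'m) ** (- B) = - (A ** B)" "(- A) ** B = - (A ** B)"
  by (auto simp: vec_eq_iff matrix_matrix_mult_def sum_negf)

lemma bb_mmult: "bounded_bilinear (\<lambda>(A::real^'n^'m) (B::real^'p^'n). A ** B)"
proof -
  have "bilinear (\<lambda>(A::real^'n^'m) (B::real^'p^'n). A ** B)"
    unfolding bilinear_def
    by (auto intro!: linearI simp: vec_eq_iff matrix_matrix_mult_def sum.distrib algebra_simps sum_distrib_left)
  thus ?thesis using bilinear_conv_bounded_bilinear by blast
qed

lemma bl_mvec: "bounded_linear (\<lambda>M::real^'n^'m. M *v u)"
proof -
  have "linear (\<lambda>M::real^'n^'m. M *v u)"
    by (auto intro!: linearI simp: vec_eq_iff matrix_vector_mult_def sum.distrib algebra_simps sum_distrib_left)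
  thus ?thesis using linear_conv_bounded_linear by blast
qed

lemma inv_has_derivative:
  fixes A :: "'a::real_normed_vector \<Rightarrow> real^'n^'n"
  assumes A: "(A has_derivative DA) (at x)" and U: "open U" "x \<in> U"
    and inv: "\<And>y. y \<in> U \<Longrightarrow> invertible (A y)"
  shows "((\<lambda>y. matrix_inv (A y)) has_derivative
           (\<lambda>h. - (matrix_inv (A x) ** DA h ** matrix_inv (A x)))) (at x)"
proof -
  have Ad: "(\<lambda>y. A y $ i $ j) differentiable (at x)" for i j
    using entry_has_derivative[OF A] unfolding differentiable_def by blast
  have dx: "det (A x) \<noteq> 0" using inv[OF U(2)] invertible_det_nz by blast
  have "(\<lambda>y. matrix_inv (A y) $ k $ j) differentiable (at x)" for k j
  proof -
    have "(\<lambda>y. det (\<chi> i l. if l = k then axis j 1 $ i else A y $ i $ l) / det (A y)) differentiable (at x)"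
    proof -
      have Ad2: "(\<lambda>y. if l = k then c i else A y $ i $ l) differentiable (at x)" for i l and c :: "'n \<Rightarrow> real"
        by (cases "l = k") (simp_all add: Ad)
      show ?thesis
        by (intro differentiable_divide det_differentiable dx Ad) (simp_all add: Ad2)
    qed
    then obtain D where "((\<lambda>y. det (\<chi> i l. if l = k then axis j 1 $ i else A y $ i $ l) / det (A y)) has_derivative D) (at x)"
      unfolding differentiable_def by blast
    hence "((\<lambda>y. matrix_inv (A y) $ k $ j) has_derivative D) (at x)"
      by (rule has_derivative_transform_within_open[OF _ U]) (simp add: minv_entry inv)
    thus ?thesis unfolding differentiable_def by blast
  qed
  hence "(\<lambda>y. matrix_inv (A y)) differentiable (at x)" by (rule mat_differentiable)
  then obtain DI where DI: "((\<lambda>y. matrix_inv (A y)) has_derivative DI) (at x)"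
    unfolding differentiable_def by blast
  have P: "((\<lambda>y. A y ** matrix_inv (A y)) has_derivative
      (\<lambda>h. A x ** DI h + DA h ** matrix_inv (A x))) (at x)"
    using bounded_bilinear.FDERIV[OF bb_mmult A DI] by simp
  have "((\<lambda>y. A y ** matrix_inv (A y)) has_derivative (\<lambda>h. 0)) (at x)"
    by (rule has_derivative_transform_within_open[OF has_derivative_const U]) (simp add: minv inv)
  hence "(\<lambda>h. A x ** DI h + DA h ** matrix_inv (A x)) = (\<lambda>h. 0)"
    by (rule has_derivative_unique[OF P])
  hence eq: "A x ** DI h + DA h ** matrix_inv (A x) = 0" for h
    using fun_cong[of _ _ h] by blast
  have "DI h = - (matrix_inv (A x) ** DA h ** matrix_inv (A x))" for h
  proof -
    have "DI h = matrix_inv (A x) ** (A x ** DI h)"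
      by (simp add: matrix_mul_assoc minv(2)[OF inv[OF U(2)]])
    also have "A x ** DI h = - (DA h ** matrix_inv (A x))" using eq[of h]
      by (simp add: add_eq_0_iff)
    finally show ?thesis by (simp add: mmult_neg matrix_mul_assoc)
  qed
  hence "DI = (\<lambda>h. - (matrix_inv (A x) ** DA h ** matrix_inv (A x)))" by (rule ext)
  thus ?thesis using DI by simp
qed

lemma deformed_has_derivative:
  fixes L J0 :: "real^'n \<Rightarrow> real^'n^'n"
  assumes L: "(L has_derivative DL) (at x)" and J: "(J0 has_derivative DJ) (at x)"
    and U: "open U" "x \<in> U" and inv: "\<And>y. y \<in> U \<Longrightarrow> invertible (mat 1 + L y)"
  shows "(deformed J0 L has_derivative
     (\<lambda>h. ((mat 1 + L x) ** J0 x) ** (- (matrix_inv (mat 1 + L x) ** DL h ** matrix_inv (mat 1 + L x)))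
        + ((mat 1 + L x) ** DJ h + DL h ** J0 x) ** matrix_inv (mat 1 + L x))) (at x)"
proof -
  have A: "((\<lambda>y. mat 1 + L y) has_derivative DL) (at x)"
    using has_derivative_add[OF has_derivative_const L] by simp
  have AJ: "((\<lambda>y. (mat 1 + L y) ** J0 y) has_derivative (\<lambda>h. (mat 1 + L x) ** DJ h + DL h ** J0 x)) (at x)"
    using bounded_bilinear.FDERIV[OF bb_mmult A J] by simp
  have AI: "((\<lambda>y. matrix_inv (mat 1 + L y)) has_derivative
     (\<lambda>h. - (matrix_inv (mat 1 + L x) ** DL h ** matrix_inv (mat 1 + L x)))) (at x)"
    by (rule inv_has_derivative[OF A U inv])
  show ?thesis
    unfolding deformed_def[abs_def]
    using bounded_bilinear.FDERIV[OF bb_mmult AJ AI] by simp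
qed

lemma nijenhuis_formula:
  fixes J :: "real^'n \<Rightarrow> real^'n^'n"
  assumes J: "(J has_derivative DJ) (at x)"
  shows "nijenhuis J x u v = (DJ (J x *v u) *v v - DJ (J x *v v) *v u)
            - J x *v (- (DJ v *v u)) - J x *v (DJ u *v v)"
proof -
  have fd: "frechet_derivative (\<lambda>y. J y *v w) (at x) = (\<lambda>h. DJ h *v w)" for w
    by (rule frechet_derivative_at[symmetric], rule bounded_linear.has_derivative[OF bl_mvec J])
  show ?thesis
    unfolding nijenhuis_def nijenhuis_field_def lie_bracket_def fd by simp
qed

lemma linear_expand:
  fixes f :: "real^'n \<Rightarrow> 'b::real_vector"
  assumes "linear f"
  shows "f h = (\<Sum>l\<in>UNIV. h $ l *\<^sub>R f (axis l 1))"
proof -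
  have "h = (\<Sum>l\<in>UNIV. h $ l *\<^sub>R axis l 1)"
    using basis_expansion[of h] by (simp add: scalar_mult_eq_scaleR)
  hence "f h = f (\<Sum>l\<in>UNIV. h $ l *\<^sub>R axis l 1)" by simp
  also have "\<dots> = (\<Sum>l\<in>UNIV. h $ l *\<^sub>R f (axis l 1))"
    using assms by (simp add: linear_sum linear_scale o_def)
  finally show ?thesis .
qed

definition GR :: "complex set \<Rightarrow> real \<Rightarrow> (real \<Rightarrow> real) \<Rightarrow> bool" where
  "GR S e f \<longleftrightarrow> Gc S e (\<lambda>t. complex_of_real (f t))"

definition GM :: "complex set \<Rightarrow> real \<Rightarrow> (real \<Rightarrow> real^'a^'b) \<Rightarrow> bool" where
  "GM S e M \<longleftrightarrow> (\<forall>i j. GR S e (\<lambda>t. M t $ i $ j))"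

definition GV :: "complex set \<Rightarrow> real \<Rightarrow> (real \<Rightarrow> real^'a) \<Rightarrow> bool" where
  "GV S e v \<longleftrightarrow> (\<forall>i. GR S e (\<lambda>t. v t $ i))"

lemma GR_const: "GR S e (\<lambda>t. c)"
  unfolding GR_def by (rule Gc_const)

lemma GR_add: "GR S e f \<Longrightarrow> GR S e g \<Longrightarrow> GR S e (\<lambda>t. f t + g t)"
  unfolding GR_def of_real_add by (rule Gc_add)

lemma GR_diff: "GR S e f \<Longrightarrow> GR S e g \<Longrightarrow> GR S e (\<lambda>t. f t - g t)"
  unfolding GR_def of_real_diff by (rule Gc_diff)

lemma GR_mult: "GR S e f \<Longrightarrow> GR S e g \<Longrightarrow> GR S e (\<lambda>t. f t * g t)"
  unfolding GR_def of_real_mult by (rule Gc_mult)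

lemma GR_uminus: "GR S e f \<Longrightarrow> GR S e (\<lambda>t. - f t)"
  using GR_diff[OF GR_const[of S e 0]] by simp

lemma GR_sum: "finite I \<Longrightarrow> (\<And>i. i \<in> I \<Longrightarrow> GR S e (f i)) \<Longrightarrow> GR S e (\<lambda>t. \<Sum>i\<in>I. f i t)"
  by (induction I rule: finite_induct) (auto intro: GR_add GR_const)

lemma GR_mono: "GR S e f \<Longrightarrow> T \<subseteq> S \<Longrightarrow> GR T e f"
  unfolding GR_def by (rule Gc_mono)

lemma Gc_cong: "Gc S e f \<Longrightarrow> (\<And>t. \<bar>t\<bar> < e \<Longrightarrow> f t = g t) \<Longrightarrow> Gc S e g"
  unfolding Gc_def by metis

lemma GR_cong: "GR S e f \<Longrightarrow> (\<And>t. \<bar>t\<bar> < e \<Longrightarrow> f t = g t) \<Longrightarrow> GR S e g"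
  unfolding GR_def by (erule Gc_cong) simp

lemma GM_const: "GM S e (\<lambda>t. c)"
  unfolding GM_def by (simp add: GR_const)

lemma GV_const: "GV S e (\<lambda>t. c)"
  unfolding GV_def by (simp add: GR_const)

lemma GM_mono: "GM S e f \<Longrightarrow> T \<subseteq> S \<Longrightarrow> GM T e f"
  unfolding GM_def using GR_mono by blast

lemma GM_add: "GM S e f \<Longrightarrow> GM S e g \<Longrightarrow> GM S e (\<lambda>t. f t + g t)"
  unfolding GM_def by (simp add: GR_add)

lemma GM_diff: "GM S e f \<Longrightarrow> GM S e g \<Longrightarrow> GM S e (\<lambda>t. f t - g t)"
  unfolding GM_def by (simp add: GR_diff)

lemma GM_uminus: "GM S e f \<Longrightarrow> GM S e (\<lambda>t. - f t)"
  unfolding GM_def by (simp add: GR_uminus)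

lemma GM_mult:
  fixes f :: "real \<Rightarrow> real^'n^'m" and g :: "real \<Rightarrow> real^'p^'n"
  shows "GM S e f \<Longrightarrow> GM S e g \<Longrightarrow> GM S e (\<lambda>t. f t ** g t)"
  unfolding GM_def matrix_matrix_mult_def by (simp add: GR_sum GR_mult)

lemma GM_scaleR: "GR S e c \<Longrightarrow> GM S e f \<Longrightarrow> GM S e (\<lambda>t. c t *\<^sub>R f t)"
  unfolding GM_def by (simp add: GR_mult)

lemma GM_sum: "finite I \<Longrightarrow> (\<And>l. l \<in> I \<Longrightarrow> GM S e (f l)) \<Longrightarrow> GM S e (\<lambda>t. \<Sum>l\<in>I. f l t)"
  unfolding GM_def by (simp add: GR_sum)

lemma GV_diff: "GV S e f \<Longrightarrow> GV S e g \<Longrightarrow> GV S e (\<lambda>t. f t - g t)"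
  unfolding GV_def by (simp add: GR_diff)

lemma GV_uminus: "GV S e f \<Longrightarrow> GV S e (\<lambda>t. - f t)"
  unfolding GV_def by (simp add: GR_uminus)

lemma GV_mvec:
  fixes M :: "real \<Rightarrow> real^'n^'m"
  shows "GM S e M \<Longrightarrow> GV S e v \<Longrightarrow> GV S e (\<lambda>t. M t *v v t)"
  unfolding GM_def GV_def matrix_vector_mult_def by (simp add: GR_sum GR_mult)

lemma GV_nth: "GV S e v \<Longrightarrow> GR S e (\<lambda>t. v t $ i)"
  unfolding GV_def by blast

lemma sums_entry:
  assumes "f sums (s::real^'a^'b)"
  shows "(\<lambda>k. f k $ i $ j) sums (s $ i $ j)"
proof -
  have "(\<lambda>k. f k $ i) sums (s $ i)"
    by (rule bounded_linear.sums[OF bounded_linear_vec_nth assms])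
  thus ?thesis by (rule bounded_linear.sums[OF bounded_linear_vec_nth])
qed

lemma GM_series:
  fixes c :: "nat \<Rightarrow> real^'a^'b" and F :: "real \<Rightarrow> real^'a^'b"
  assumes S: "S \<subseteq> ball 0 e" and sm: "\<And>t. \<bar>t\<bar> < e \<Longrightarrow> (\<lambda>k. (t ^ k) *\<^sub>R c k) sums F t"
  shows "GM S e F"
  unfolding GM_def GR_def
proof (intro allI)
  fix i j
  show "Gc S e (\<lambda>t. complex_of_real (F t $ i $ j))"
    by (rule powser_Gc[OF S, of "\<lambda>k. c k $ i $ j"]) (use sums_entry[OF sm] in simp)
qed

lemma smooth_differentiable:
  assumes "smooth_mat_field U M" "x \<in> U"
  shows "M differentiable (at x)"
proof (rule mat_differentiable)
  fix i j
  have "Ck_on (Suc 0) U (\<lambda>x. M x $ i $ j)"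
    using assms(1) unfolding smooth_mat_field_def smooth_on_def by blast
  thus "(\<lambda>y. M y $ i $ j) differentiable (at x)" using assms(2) by simp
qed

lemma rank_eq:
  "nijenhuis_rank J x = vec.dim (range (\<lambda>p. \<chi> k. complex_of_real (nijenhuis J x (axis (fst p) 1) (axis (snd p) 1) $ k)))"
proof -
  define X where "X i j = (\<chi> k. complex_of_real (nijenhuis J x (axis i 1) (axis j 1) $ k))" for i j
  define W where "W = range (\<lambda>p. X (fst p) (snd p))"
  define R where "R = range (\<lambda>(u, v). nijenhuis_C J x u v)"
  have C: "nijenhuis_C J x u v = (\<Sum>i\<in>UNIV. \<Sum>j\<in>UNIV. (u $ i * v $ j) *s X i j)" for u v
    unfolding nijenhuis_C_def X_def ..
  have XW: "X i j \<in> W" for i j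
    unfolding W_def using rangeI[of "\<lambda>p. X (fst p) (snd p)" "(i,j)"] by simp
  have RW: "R \<subseteq> vec.span W"
  proof
    fix r assume "r \<in> R"
    then obtain u v where r: "r = nijenhuis_C J x u v" unfolding R_def by auto
    show "r \<in> vec.span W" unfolding r C
      by (intro vec.span_sum vec.span_scale vec.span_base XW)
  qed
  have WR: "W \<subseteq> R"
  proof
    fix w assume "w \<in> W"
    then obtain i j where w: "w = X i j" unfolding W_def by auto
    have "nijenhuis_C J x (axis i 1) (axis j 1) = X i j"
    proof -
      have pt: "(axis i 1 $ i' * axis j 1 $ j') *s X i' j' = (if i' = i then (if j' = j then X i' j' else 0) else 0)" for i' j'
        by (simp add: axis_def)
      have "(\<Sum>i'\<in>UNIV. \<Sum>j'\<in>UNIV. (if i' = i then (if j' = j then X i' j' else 0) else 0))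
          = (\<Sum>i'\<in>UNIV. if i' = i then X i' j else 0)"
        by (rule sum.cong[OF refl], case_tac "x = i") simp_all
      thus ?thesis unfolding C pt by simp
    qed
    thus "w \<in> R" unfolding R_def w by (metis (no_types, lifting) case_prod_conv rangeI)
  qed
  have "vec.dim R \<le> vec.dim (vec.span W)" by (rule vec.dim_subset[OF RW])
  hence d1: "vec.dim R \<le> vec.dim W" by simp
  have d2: "vec.dim W \<le> vec.dim R" by (rule vec.dim_subset[OF WR])
  have "vec.dim R = vec.dim W" using d1 d2 by simp
  thus ?thesis unfolding nijenhuis_rank_def R_def W_def X_def by simp
qed

theorem lemma3p1:
  fixes U :: "(real^'n) set" and J0 :: "real^'n \<Rightarrow> real^'n^'n"
    and Lc :: "nat \<Rightarrow> real^'n \<Rightarrow> real^'n^'n"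
    and Lt :: "real \<Rightarrow> real^'n \<Rightarrow> real^'n^'n"
    and \<epsilon> :: real and m :: nat
  assumes dim: "CARD('n) = 2 * m"
    and acs: "almost_complex_structure U J0"
    and eps: "\<epsilon> > 0"
    and coeff_smooth: "\<And>k. smooth_mat_field U (Lc k)"
    and coeff0: "\<And>x. x \<in> U \<Longrightarrow> Lc 0 x = 0"
    and series: "\<And>t x. \<bar>t\<bar> < \<epsilon> \<Longrightarrow> x \<in> U \<Longrightarrow> (\<lambda>k. (t ^ k) *\<^sub>R Lc k x) sums Lt t x"
    and series_deriv: "\<And>t x i. \<bar>t\<bar> < \<epsilon> \<Longrightarrow> x \<in> U \<Longrightarrow>
          (\<lambda>k. (t ^ k) *\<^sub>R frechet_derivative (Lc k) (at x) (axis i 1))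
            sums frechet_derivative (Lt t) (at x) (axis i 1)"
    and Lt_smooth: "\<And>t. \<bar>t\<bar> < \<epsilon> \<Longrightarrow> smooth_mat_field U (Lt t)"
    and anticomm: "\<And>t x. \<bar>t\<bar> < \<epsilon> \<Longrightarrow> x \<in> U \<Longrightarrow> Lt t x ** J0 x + J0 x ** Lt t x = 0"
    and inv: "\<And>t x. \<bar>t\<bar> < \<epsilon> \<Longrightarrow> x \<in> U \<Longrightarrow> invertible (mat 1 + Lt t x)"
  shows "\<forall>a\<in>{0<..<\<epsilon>}. \<forall>x\<in>U.
           finite {t \<in> {-a..a}. nijenhuis_rank (deformed J0 (Lt t)) x
                     < max (nijenhuis_rank J0 x) (nijenhuis_rank (deformed J0 (Lt a)) x)}"
proof (intro ballI)
  fix a x assume a: "a \<in> {0<..<\<epsilon>}" and x: "x \<in> U"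
  have a0: "0 < a" "a < \<epsilon>" using a by auto
  have U: "open U" and J0s: "smooth_mat_field U J0"
    using acs unfolding almost_complex_structure_def by auto
  define Af where "Af t = mat 1 + Lt t x" for t
  define Bf where "Bf l t = frechet_derivative (Lt t) (at x) (axis l 1)" for l t
  define Jc where "Jc = J0 x"
  define DJc where "DJc l = frechet_derivative J0 (at x) (axis l 1)" for l
  define Aif where "Aif t = matrix_inv (Af t)" for t
  define DLf where "DLf t h = (\<Sum>l\<in>UNIV. h $ l *\<^sub>R Bf l t)" for t and h :: "real^'n"
  define DJ0f where "DJ0f h = (\<Sum>l\<in>UNIV. h $ l *\<^sub>R DJc l)" for h :: "real^'n"
  define DJtf where "DJtf t h = (Af t ** Jc) ** (- (Aif t ** DLf t h ** Aif t))
      + (Af t ** DJ0f h + DLf t h ** Jc) ** Aif t" for t h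
  define Jtf where "Jtf t = Af t ** Jc ** Aif t" for t
  define Nf where "Nf t u v = (DJtf t (Jtf t *v u) *v v - DJtf t (Jtf t *v v) *v u)
      - Jtf t *v (- (DJtf t v *v u)) - Jtf t *v (DJtf t u *v v)" for t u v

  have J0d: "(J0 has_derivative frechet_derivative J0 (at x)) (at x)"
    using smooth_differentiable[OF J0s x] frechet_derivative_works by blast
  have N_eq: "nijenhuis (deformed J0 (Lt t)) x u v = Nf t u v" if t: "\<bar>t\<bar> < \<epsilon>" for t u v
  proof -
    have Ld: "(Lt t has_derivative frechet_derivative (Lt t) (at x)) (at x)"
      using smooth_differentiable[OF Lt_smooth[OF t] x] frechet_derivative_works by blast
    have lin1: "frechet_derivative (Lt t) (at x) h = DLf t h" for h
      unfolding DLf_def Bf_def by (rule linear_expand[OF has_derivative_linear[OF Ld]])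
    have lin2: "frechet_derivative J0 (at x) h = DJ0f h" for h
      unfolding DJ0f_def DJc_def by (rule linear_expand[OF has_derivative_linear[OF J0d]])
    have D: "(deformed J0 (Lt t) has_derivative (\<lambda>h. DJtf t h)) (at x)"
      using deformed_has_derivative[OF Ld J0d U x inv[OF t]]
      unfolding lin1 lin2 DJtf_def Af_def Aif_def Jc_def .
    have "Jtf t = deformed J0 (Lt t) x" unfolding Jtf_def deformed_def Af_def Aif_def Jc_def ..
    thus ?thesis using nijenhuis_formula[OF D, of u v] unfolding Nf_def by simp
  qed

  define B where "B = ball (0::complex) \<epsilon>"
  have GL: "GM B \<epsilon> (\<lambda>t. Lt t x)"
    by (rule GM_series[of B \<epsilon> "\<lambda>k. Lc k x"]) (auto simp: B_def intro: series x)
  have GB: "GM B \<epsilon> (Bf l)" for l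
    unfolding Bf_def
    by (rule GM_series[of B \<epsilon> "\<lambda>k. frechet_derivative (Lc k) (at x) (axis l 1)"])
      (auto simp: B_def intro: series_deriv x)
  have GA: "GM B \<epsilon> Af" unfolding Af_def by (intro GM_add GM_const GL)
  have "Gc B \<epsilon> (\<lambda>t. det (\<chi> i j. complex_of_real (Af t $ i $ j)))"
    by (rule Gc_det) (use GA in \<open>simp add: GM_def GR_def\<close>)
  then obtain D where D: "D holomorphic_on B" "\<And>t. \<bar>t\<bar> < \<epsilon> \<Longrightarrow> D (of_real t) = of_real (det (Af t))"
    unfolding Gc_def of_real_det by metis
  define S0 where "S0 = {z \<in> B. D z \<noteq> 0}"
  define S where "S = connected_component_set S0 0"
  have "open (B \<inter> D -` (- {0}))"
    by (rule continuous_open_preimage[OF holomorphic_on_imp_continuous_on[OF D(1)]])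
       (auto simp: B_def)
  moreover have "B \<inter> D -` (- {0}) = S0" unfolding S0_def by auto
  ultimately have openS0: "open S0" by simp
  have real_in: "complex_of_real t \<in> S0" if "\<bar>t\<bar> < \<epsilon>" for t
  proof -
    have "det (Af t) \<noteq> 0" unfolding Af_def using inv[OF that x] invertible_det_nz by blast
    thus ?thesis using that D(2)[OF that] by (simp add: S0_def B_def)
  qed
  have sub: "complex_of_real ` {-\<epsilon><..<\<epsilon>} \<subseteq> S"
    unfolding S_def
  proof (rule connected_component_maximal)
    show "0 \<in> complex_of_real ` {-\<epsilon><..<\<epsilon>}" using eps by (auto intro!: image_eqI[of _ _ 0])
    show "connected (complex_of_real ` {-\<epsilon><..<\<epsilon>})"
      by (intro connected_continuous_image continuous_intros) (auto intro: is_interval_connected simp: is_interval_def)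
    show "complex_of_real ` {-\<epsilon><..<\<epsilon>} \<subseteq> S0" using real_in by auto
  qed
  have openS: "open S" unfolding S_def by (rule open_connected_component[OF openS0])
  have connS: "connected S" unfolding S_def by simp
  have SB: "S \<subseteq> B" unfolding S_def S0_def using connected_component_subset by blast
  have Dnz: "D z \<noteq> 0" if "z \<in> S" for z
    using that connected_component_subset unfolding S_def S0_def by blast
  have GAS: "GM S \<epsilon> Af" by (rule GM_mono[OF GA SB])
  have GBS: "GM S \<epsilon> (Bf l)" for l by (rule GM_mono[OF GB SB])
  have GAi: "GM S \<epsilon> Aif"
    unfolding GM_def
  proof (intro allI)
    fix k j
    define N where "N t = (\<chi> i l. if l = k then axis j 1 $ i else Af t $ i $ l)" for t
    have "Gc S \<epsilon> (\<lambda>t. det (\<chi> i l. complex_of_real (N t $ i $ l)))"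
    proof (rule Gc_det)
      fix i l
      show "Gc S \<epsilon> (\<lambda>t. (\<chi> i l. complex_of_real (N t $ i $ l)) $ i $ l)"
        using GAS unfolding GM_def GR_def N_def by (cases "l = k") (simp_all add: Gc_const)
    qed
    hence "Gc S \<epsilon> (\<lambda>t. complex_of_real (det (N t)) / complex_of_real (det (Af t)))"
      unfolding of_real_det[symmetric]
      by (rule Gc_div[OF _ holomorphic_on_subset[OF D(1) SB] Dnz D(2)])
    thus "GR S \<epsilon> (\<lambda>t. Aif t $ k $ j)"
      unfolding GR_def
    proof (rule Gc_cong)
      fix t :: real assume "\<bar>t\<bar> < \<epsilon>"
      hence "invertible (Af t)" unfolding Af_def using inv x by blast
      thus "complex_of_real (det (N t)) / complex_of_real (det (Af t)) = complex_of_real (Aif t $ k $ j)"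
        unfolding Aif_def N_def by (simp add: minv_entry)
    qed
  qed
  have GJt: "GM S \<epsilon> Jtf" unfolding Jtf_def by (intro GM_mult GAS GAi GM_const)
  have GDJ: "GM S \<epsilon> (\<lambda>t. DJtf t (h t))" if "GV S \<epsilon> h" for h
    unfolding DJtf_def DLf_def DJ0f_def
    by (intro GM_add GM_mult GM_uminus GM_sum GM_scaleR GV_nth GM_const GAS GAi GBS that) simp_all
  have GN: "GV S \<epsilon> (\<lambda>t. Nf t u v)" for u v
    unfolding Nf_def
    by (intro GV_diff GV_mvec GV_uminus GDJ GJt GV_const)
  define w where "w t p = (\<chi> k. complex_of_real (Nf t (axis (fst p) 1) (axis (snd p) 1) $ k))" for t p
  have Gw: "Gc S \<epsilon> (\<lambda>t. w t p $ k)" for p k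
    using GV_nth[OF GN, of "axis (fst p) 1" "axis (snd p) 1" k] unfolding GR_def w_def by simp
  have "{-a..a} \<subseteq> {-\<epsilon><..<\<epsilon>}" using a0 by auto
  hence "complex_of_real ` {-a..a} \<subseteq> complex_of_real ` {-\<epsilon><..<\<epsilon>}" by (rule image_mono)
  hence subS: "complex_of_real ` {-a..a} \<subseteq> S" using sub by (rule subset_trans)
  have "0 \<le> a" using a0 by simp
  from generic_rank[OF Gw openS connS subS a0(2) this]
  obtain Z where ZZ: "finite Z \<and> (\<forall>t\<in>{-a..a} - Z. \<forall>s\<in>{-a..a}. vec.dim (range (w s)) \<le> vec.dim (range (w t)))"
    ..
  have Z1: "finite Z" using ZZ ..
  have Z2: "vec.dim (range (w s)) \<le> vec.dim (range (w t))" if "t \<in> {-a..a} - Z" "s \<in> {-a..a}" for t s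
    using ZZ that by simp
  note Z = Z1 Z2
  have rk: "nijenhuis_rank (deformed J0 (Lt t)) x = vec.dim (range (w t))" if "\<bar>t\<bar> < \<epsilon>" for t
    unfolding rank_eq w_def N_eq[OF that] ..
  have L0: "Lt 0 y = 0" if "y \<in> U" for y
  proof -
    have "(\<lambda>k. (0::real) ^ k *\<^sub>R Lc k y) = (\<lambda>k. 0)"
    proof
      fix k show "(0::real) ^ k *\<^sub>R Lc k y = 0" by (cases k) (simp_all add: coeff0[OF that])
    qed
    hence "(\<lambda>k. 0) sums Lt 0 y" using series[of 0 y] eps that by simp
    thus ?thesis using sums_zero sums_unique2 by blast
  qed
  have inv1: "matrix_inv (mat 1 :: real^'n^'n) = mat 1"
  proof -
    have "invertible (mat 1 :: real^'n^'n)" unfolding invertible_def by (rule exI[of _ "mat 1"]) simp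
    from minv(1)[OF this] show ?thesis by simp
  qed
  have eqU: "deformed J0 (Lt 0) y = J0 y" if "y \<in> U" for y
    unfolding deformed_def L0[OF that] by (simp add: inv1)
  have D0: "(deformed J0 (Lt 0) has_derivative frechet_derivative J0 (at x)) (at x)"
    by (rule has_derivative_transform_within_open[OF J0d U x]) (simp add: eqU)
  have "nijenhuis (deformed J0 (Lt 0)) x u v = nijenhuis J0 x u v" for u v
    using nijenhuis_formula[OF D0, of u v] nijenhuis_formula[OF J0d, of u v] eqU[OF x] by simp
  hence rk0: "nijenhuis_rank J0 x = nijenhuis_rank (deformed J0 (Lt 0)) x"
    unfolding nijenhuis_rank_def nijenhuis_C_def by simp
  have "{t \<in> {-a..a}. nijenhuis_rank (deformed J0 (Lt t)) x
           < max (nijenhuis_rank J0 x) (nijenhuis_rank (deformed J0 (Lt a)) x)} \<subseteq> Z"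
  proof
    fix t assume t: "t \<in> {t \<in> {-a..a}. nijenhuis_rank (deformed J0 (Lt t)) x
           < max (nijenhuis_rank J0 x) (nijenhuis_rank (deformed J0 (Lt a)) x)}"
    show "t \<in> Z"
    proof (rule ccontr)
      assume "t \<notin> Z"
      hence tZ: "t \<in> {-a..a} - Z" using t by auto
      have tl: "\<bar>t\<bar> < \<epsilon>" using t a0 by auto
      have "nijenhuis_rank J0 x \<le> nijenhuis_rank (deformed J0 (Lt t)) x"
        unfolding rk0 rk[OF tl] using Z(2)[OF tZ, of 0] a0 eps by (simp add: rk)
      moreover have "nijenhuis_rank (deformed J0 (Lt a)) x \<le> nijenhuis_rank (deformed J0 (Lt t)) x"
        unfolding rk[OF tl] using Z(2)[OF tZ, of a] a0 by (simp add: rk)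
      ultimately show False using t by auto
    qed
  qed
  thus "finite {t \<in> {-a..a}. nijenhuis_rank (deformed J0 (Lt t)) x
           < max (nijenhuis_rank J0 x) (nijenhuis_rank (deformed J0 (Lt a)) x)}"
    using Z(1) finite_subset by blast
qed

end
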